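(* Let $(A,\mu,\alpha,\beta)$ be a BiHom-commutative algebra (with $\mu(x\otimes y)=x\cdot y$). Let $\gamma,\lambda,\xi:A\to A$ be linear maps such that $\gamma(x\cdot y)=\gamma(x)\cdot\gamma(y)$, $\lambda(x\cdot y)=\lambda(x)\cdot\lambda(y)$ and $\xi(x\cdot y)=\xi(x)\cdot\xi(y)$ for all $x,y\in A$. Let $D:A\to A$ be a linear map, assume that any two of the maps $\alpha,\beta,\gamma,\lambda,\xi,D$ commute, and that $D(a\cdot b)=\gamma(a)\cdot D(b)+D(a)\cdot\gamma(b)$ for all $a,b\in A$. Define a new multiplication on $A$ by $a\ast b=\lambda(a)\cdot\xi D(b)$. Then $(A,\ast,\lambda\alpha,\xi\beta\gamma)$ is a BiHom-Novikov algebra.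
   Context: Work over a field. A BiHom-associative algebra is a 4-tuple $(A,\mu,\alpha,\beta)$ with $\alpha,\beta:A\to A$ linear, $\alpha\beta=\beta\alpha$, $\alpha,\beta$ multiplicative for $\mu$ (written $x\cdot y$), and $\alpha(x)\cdot(y\cdot z)=(x\cdot y)\cdot\beta(z)$ for all $x,y,z$. It is BiHom-commutative if moreover $\beta(a)\cdot\alpha(b)=\beta(b)\cdot\alpha(a)$ for all $a,b$. A BiHom-Novikov algebra is a 4-tuple $(A,\mu,\alpha,\beta)$ with commuting linear $\alpha,\beta$ such that for all $x,y,z$: $\alpha(x\cdot y)=\alpha(x)\cdot\alpha(y)$, $\beta(x\cdot y)=\beta(x)\cdot\beta(y)$, $(\beta(x)\cdot\alpha(y))\cdot\beta(z)-\alpha\beta(x)\cdot(\alpha(y)\cdot z)=(\beta(y)\cdot\alpha(x))\cdot\beta(z)-\alpha\beta(y)\cdot(\alpha(x)\cdot z)$, and $(x\cdot\beta(y))\cdot\alpha\beta(z)=(x\cdot\beta(z))\cdot\alpha\beta(y)$. *)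

theory Defs
  imports Main "HOL.Vector_Spaces"
begin

definition bilinear_map :: "('k::field \<Rightarrow> 'v::ab_group_add \<Rightarrow> 'v) \<Rightarrow> ('v \<Rightarrow> 'v \<Rightarrow> 'v) \<Rightarrow> bool" where
  "bilinear_map sc mu \<longleftrightarrow> (\<forall>x. Vector_Spaces.linear sc sc (mu x)) \<and> (\<forall>y. Vector_Spaces.linear sc sc (\<lambda>x. mu x y))"

definition multiplicative :: "('v \<Rightarrow> 'v \<Rightarrow> 'v) \<Rightarrow> ('v \<Rightarrow> 'v) \<Rightarrow> bool" where
  "multiplicative mu f \<longleftrightarrow> (\<forall>x y. f (mu x y) = mu (f x) (f y))"

definition BiHom_assoc_algebra ::
  "('k::field \<Rightarrow> 'v::ab_group_add \<Rightarrow> 'v) \<Rightarrow> ('v \<Rightarrow> 'v \<Rightarrow> 'v) \<Rightarrow> ('v \<Rightarrow> 'v) \<Rightarrow> ('v \<Rightarrow> 'v) \<Rightarrow> bool" where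
  "BiHom_assoc_algebra sc mu \<alpha> \<beta> \<longleftrightarrow>
     vector_space sc \<and> bilinear_map sc mu \<and> Vector_Spaces.linear sc sc \<alpha> \<and> Vector_Spaces.linear sc sc \<beta> \<and>
     \<alpha> \<circ> \<beta> = \<beta> \<circ> \<alpha> \<and> multiplicative mu \<alpha> \<and> multiplicative mu \<beta> \<and>
     (\<forall>x y z. mu (\<alpha> x) (mu y z) = mu (mu x y) (\<beta> z))"

definition BiHom_comm_algebra ::
  "('k::field \<Rightarrow> 'v::ab_group_add \<Rightarrow> 'v) \<Rightarrow> ('v \<Rightarrow> 'v \<Rightarrow> 'v) \<Rightarrow> ('v \<Rightarrow> 'v) \<Rightarrow> ('v \<Rightarrow> 'v) \<Rightarrow> bool" where
  "BiHom_comm_algebra sc mu \<alpha> \<beta> \<longleftrightarrow>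
     BiHom_assoc_algebra sc mu \<alpha> \<beta> \<and> (\<forall>a b. mu (\<beta> a) (\<alpha> b) = mu (\<beta> b) (\<alpha> a))"

definition BiHom_Novikov_algebra ::
  "('k::field \<Rightarrow> 'v::ab_group_add \<Rightarrow> 'v) \<Rightarrow> ('v \<Rightarrow> 'v \<Rightarrow> 'v) \<Rightarrow> ('v \<Rightarrow> 'v) \<Rightarrow> ('v \<Rightarrow> 'v) \<Rightarrow> bool" where
  "BiHom_Novikov_algebra sc mu \<alpha> \<beta> \<longleftrightarrow>
     vector_space sc \<and> bilinear_map sc mu \<and> Vector_Spaces.linear sc sc \<alpha> \<and> Vector_Spaces.linear sc sc \<beta> \<and>
     \<alpha> \<circ> \<beta> = \<beta> \<circ> \<alpha> \<and> multiplicative mu \<alpha> \<and> multiplicative mu \<beta> \<and>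
     (\<forall>x y z. mu (mu (\<beta> x) (\<alpha> y)) (\<beta> z) - mu (\<alpha> (\<beta> x)) (mu (\<alpha> y) z)
            = mu (mu (\<beta> y) (\<alpha> x)) (\<beta> z) - mu (\<alpha> (\<beta> y)) (mu (\<alpha> x) z)) \<and>
     (\<forall>x y z. mu (mu x (\<beta> y)) (\<alpha> (\<beta> z)) = mu (mu x (\<beta> z)) (\<alpha> (\<beta> y)))"

end

theory Submission
  imports Defs
begin

theorem proposition2p7:
  fixes sc :: "'k::field \<Rightarrow> 'v::ab_group_add \<Rightarrow> 'v"
    and mu :: "'v \<Rightarrow> 'v \<Rightarrow> 'v"
    and \<alpha> \<beta> \<gamma> lam \<xi> D :: "'v \<Rightarrow> 'v"
  assumes A: "BiHom_comm_algebra sc mu \<alpha> \<beta>"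
    and lin: "Vector_Spaces.linear sc sc \<gamma>" "Vector_Spaces.linear sc sc lam" "Vector_Spaces.linear sc sc \<xi>" "Vector_Spaces.linear sc sc D"
    and mult: "multiplicative mu \<gamma>" "multiplicative mu lam" "multiplicative mu \<xi>"
    and comm: "\<forall>f\<in>{\<alpha>, \<beta>, \<gamma>, lam, \<xi>, D}. \<forall>g\<in>{\<alpha>, \<beta>, \<gamma>, lam, \<xi>, D}. f \<circ> g = g \<circ> f"
    and der: "\<forall>a b. D (mu a b) = mu (\<gamma> a) (D b) + mu (D a) (\<gamma> b)"
  shows "BiHom_Novikov_algebra sc (\<lambda>a b. mu (lam a) (\<xi> (D b))) (lam \<circ> \<alpha>) (\<xi> \<circ> \<beta> \<circ> \<gamma>)"
proof -
  have cm: "\<And>f g x. f \<in> {\<alpha>, \<beta>, \<gamma>, lam, \<xi>, D} \<Longrightarrow> g \<in> {\<alpha>, \<beta>, \<gamma>, lam, \<xi>, D} \<Longrightarrow> g (f x) = f (g x)"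
    using comm by (metis comp_apply)
  note c1 = cm[of \<alpha> \<beta>] cm[of \<alpha> \<gamma>] cm[of \<alpha> lam] cm[of \<alpha> \<xi>] cm[of \<alpha> D]
    cm[of \<beta> \<gamma>] cm[of \<beta> lam] cm[of \<beta> \<xi>] cm[of \<beta> D]
    cm[of \<gamma> lam] cm[of \<gamma> \<xi>] cm[of \<gamma> D] cm[of lam \<xi>] cm[of lam D] cm[of \<xi> D]
  have C: "\<beta> (\<alpha> x) = \<alpha> (\<beta> x)" "\<gamma> (\<alpha> x) = \<alpha> (\<gamma> x)" "lam (\<alpha> x) = \<alpha> (lam x)"
    "\<xi> (\<alpha> x) = \<alpha> (\<xi> x)" "D (\<alpha> x) = \<alpha> (D x)"
    "\<gamma> (\<beta> x) = \<beta> (\<gamma> x)" "lam (\<beta> x) = \<beta> (lam x)" "\<xi> (\<beta> x) = \<beta> (\<xi> x)" "D (\<beta> x) = \<beta> (D x)"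
    "lam (\<gamma> x) = \<gamma> (lam x)" "\<xi> (\<gamma> x) = \<gamma> (\<xi> x)" "D (\<gamma> x) = \<gamma> (D x)"
    "\<xi> (lam x) = lam (\<xi> x)" "D (lam x) = lam (D x)" "D (\<xi> x) = \<xi> (D x)" for x
    using c1 by auto
  have vs: "vector_space sc" and bl: "bilinear_map sc mu" and la: "Vector_Spaces.linear sc sc \<alpha>"
    and lb: "Vector_Spaces.linear sc sc \<beta>" and ab: "\<alpha> \<circ> \<beta> = \<beta> \<circ> \<alpha>"
    and ma: "multiplicative mu \<alpha>" and mb: "multiplicative mu \<beta>"
    and asc: "\<And>x y z. mu (\<alpha> x) (mu y z) = mu (mu x y) (\<beta> z)"
    and bc: "\<And>a b. mu (\<beta> a) (\<alpha> b) = mu (\<beta> b) (\<alpha> a)"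
    using A unfolding BiHom_comm_algebra_def BiHom_assoc_algebra_def by auto
  have M: "\<alpha> (mu x y) = mu (\<alpha> x) (\<alpha> y)" "\<beta> (mu x y) = mu (\<beta> x) (\<beta> y)"
    "\<gamma> (mu x y) = mu (\<gamma> x) (\<gamma> y)" "lam (mu x y) = mu (lam x) (lam y)" "\<xi> (mu x y) = mu (\<xi> x) (\<xi> y)" for x y
    using ma mb mult unfolding multiplicative_def by auto
  have Dm: "D (mu a b) = mu (\<gamma> a) (D b) + mu (D a) (\<gamma> b)" for a b using der by auto
  have xiadd: "\<xi> (a + b) = \<xi> a + \<xi> b" for a b using lin(3) unfolding linear_iff by auto
  have mu2: "Vector_Spaces.linear sc sc (mu x)" for x using bl unfolding bilinear_map_def by auto
  have mu1: "Vector_Spaces.linear sc sc (\<lambda>y. mu y x)" for x using bl unfolding bilinear_map_def by auto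
  have muadd: "mu x (a + b) = mu x a + mu x b" for x a b using mu2[of x] unfolding linear_iff by auto
  have key: "mu (\<alpha> (\<beta> a)) (mu (\<alpha> b) c) = mu (\<alpha> (\<beta> b)) (mu (\<alpha> a) c)" for a b c
    using asc[of "\<beta> a" "\<alpha> b" c] asc[of "\<beta> b" "\<alpha> a" c] bc[of a b] by simp
  note N = C M Dm xiadd muadd
  show ?thesis
    unfolding BiHom_Novikov_algebra_def
  proof (intro conjI allI)
    show "vector_space sc" by fact
    show "bilinear_map sc (\<lambda>a b. mu (lam a) (\<xi> (D b)))"
      unfolding bilinear_map_def
    proof (intro conjI allI)
      fix x
      have "Vector_Spaces.linear sc sc (mu (lam x) \<circ> (\<xi> \<circ> D))"
        by (rule Vector_Spaces.linear_compose[OF Vector_Spaces.linear_compose[OF lin(4) lin(3)] mu2])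
      then show "Vector_Spaces.linear sc sc (\<lambda>b. mu (lam x) (\<xi> (D b)))" by (simp add: comp_def)
    next
      fix y
      have "Vector_Spaces.linear sc sc ((\<lambda>a. mu a (\<xi> (D y))) \<circ> lam)"
        by (rule Vector_Spaces.linear_compose[OF lin(2) mu1])
      then show "Vector_Spaces.linear sc sc (\<lambda>a. mu (lam a) (\<xi> (D y)))" by (simp add: comp_def)
    qed
    show "Vector_Spaces.linear sc sc (lam \<circ> \<alpha>)" by (rule Vector_Spaces.linear_compose[OF la lin(2)])
    show "Vector_Spaces.linear sc sc (\<xi> \<circ> \<beta> \<circ> \<gamma>)" by (rule Vector_Spaces.linear_compose[OF lin(1) Vector_Spaces.linear_compose[OF lb lin(3)]])
    show "lam \<circ> \<alpha> \<circ> (\<xi> \<circ> \<beta> \<circ> \<gamma>) = \<xi> \<circ> \<beta> \<circ> \<gamma> \<circ> (lam \<circ> \<alpha>)"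
      by (rule ext) (simp add: N)
    show "multiplicative (\<lambda>a b. mu (lam a) (\<xi> (D b))) (lam \<circ> \<alpha>)"
      unfolding multiplicative_def by (simp add: N)
    show "multiplicative (\<lambda>a b. mu (lam a) (\<xi> (D b))) (\<xi> \<circ> \<beta> \<circ> \<gamma>)"
      unfolding multiplicative_def by (simp add: N)
  next
    fix x y z
    define V where "V t = \<gamma> (lam (\<xi> (\<xi> (D t))))" for t
    have e: "mu (mu (lam (lam x)) (\<beta> (V y))) (\<alpha> (\<beta> (V z))) = mu (\<alpha> (lam (lam x))) (mu (\<beta> (V z)) (\<alpha> (V y)))"
      using asc[of "lam (lam x)" "\<beta> (V y)" "\<alpha> (V z)"] bc[of "V y" "V z"] by (simp add: C)
    have e2: "mu (mu (lam (lam x)) (\<beta> (V z))) (\<alpha> (\<beta> (V y))) = mu (\<alpha> (lam (lam x))) (mu (\<beta> (V z)) (\<alpha> (V y)))"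
      using asc[of "lam (lam x)" "\<beta> (V z)" "\<alpha> (V y)"] by (simp add: C)
    show "mu (lam (mu (lam x) (\<xi> (D ((\<xi> \<circ> \<beta> \<circ> \<gamma>) y))))) (\<xi> (D ((lam \<circ> \<alpha>) ((\<xi> \<circ> \<beta> \<circ> \<gamma>) z)))) =
          mu (lam (mu (lam x) (\<xi> (D ((\<xi> \<circ> \<beta> \<circ> \<gamma>) z))))) (\<xi> (D ((lam \<circ> \<alpha>) ((\<xi> \<circ> \<beta> \<circ> \<gamma>) y))))"
      using e e2 by (simp add: N V_def)
  next
    fix x y z
    show "mu (lam (mu (lam ((\<xi> \<circ> \<beta> \<circ> \<gamma>) x)) (\<xi> (D ((lam \<circ> \<alpha>) y))))) (\<xi> (D ((\<xi> \<circ> \<beta> \<circ> \<gamma>) z))) -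
          mu (lam ((lam \<circ> \<alpha>) ((\<xi> \<circ> \<beta> \<circ> \<gamma>) x))) (\<xi> (D (mu (lam ((lam \<circ> \<alpha>) y)) (\<xi> (D z))))) =
          mu (lam (mu (lam ((\<xi> \<circ> \<beta> \<circ> \<gamma>) y)) (\<xi> (D ((lam \<circ> \<alpha>) x))))) (\<xi> (D ((\<xi> \<circ> \<beta> \<circ> \<gamma>) z))) -
          mu (lam ((lam \<circ> \<alpha>) ((\<xi> \<circ> \<beta> \<circ> \<gamma>) y))) (\<xi> (D (mu (lam ((lam \<circ> \<alpha>) x)) (\<xi> (D z)))))"
      by (simp add: N asc[symmetric] key[of "\<gamma> (lam (lam (\<xi> x)))"])
  qed
qed

end
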